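(* Let $G$ be a spectrally threshold dominated graph on $n$ nodes with $m$ edges. Then there exists a threshold graph $T$ on $n$ nodes with $m$ edges such that $LE(T)\ge LE(G)$.
   Context: All graphs are finite and simple. For a graph $G$ on node set $\{1,\dots,n\}$ with edge set $E$, $m=|E|$, the Laplacian matrix is $L(G)=D(G)-A(G)$ (degree matrix minus adjacency matrix); its eigenvalues, the Laplacian eigenvalues of $G$, are denoted $\lambda_1(G)\ge\lambda_2(G)\ge\dots\ge\lambda_n(G)=0$. The Laplacian energy is $LE(G)=\sum_{i=1}^n\left|\lambda_i(G)-\frac{2m}{n}\right|$. A threshold graph is a graph obtainable from the empty graph by repeatedly adding a new node that is either isolated or adjacent to all previously added nodes. For a graph with degrees $d_1\ge\dots\ge d_n$, the conjugate degrees are $d_i^*=|\{j: d_j\ge i\}|$; for a threshold graph $T$ one has $\lambda_i(T)=d_i^*(T)$ for all $i$. A graph $G$ on $n$ nodes with $m$ edges is spectrally threshold dominated if for each $k\in\{1,\dots,n\}$ there is a threshold graph $T_k$ on $n$ nodes with $m$ edges satisfying $\sum_{i=1}^k\lambda_i(T_k)\ge\sum_{i=1}^k\lambda_i(G)$. *)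

theory Defs
  imports "Jordan_Normal_Form.Char_Poly"
begin

text \<open>Simple graphs on the node set {0..<n} (nodes relabelled from {1..n}),
  edges are 2-element subsets of the node set.\<close>

definition simple_graph :: "nat \<Rightarrow> nat set set \<Rightarrow> bool" where
  "simple_graph n E \<longleftrightarrow> (\<forall>e\<in>E. \<exists>i j. i \<noteq> j \<and> i < n \<and> j < n \<and> e = {i, j})"

definition degree :: "nat set set \<Rightarrow> nat \<Rightarrow> nat" where
  "degree E i = card {e \<in> E. i \<in> e}"

definition laplacian :: "nat \<Rightarrow> nat set set \<Rightarrow> real mat" where
  "laplacian n E = mat n n (\<lambda>(i, j).
      if i = j then real (degree E i) else if {i, j} \<in> E then -1 else 0)"

definition lap_eigs :: "nat \<Rightarrow> nat set set \<Rightarrow> real list" where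
  "lap_eigs n E = rev (sorted_list_of_multiset (proots (char_poly (laplacian n E))))"

definition lap_energy :: "nat \<Rightarrow> nat set set \<Rightarrow> real" where
  "lap_energy n E = (\<Sum>x\<leftarrow>lap_eigs n E. \<bar>x - 2 * real (card E) / real n\<bar>)"

inductive threshold :: "nat set \<Rightarrow> nat set set \<Rightarrow> bool" where
  empty: "threshold {} {}"
| isolated: "threshold V E \<Longrightarrow> v \<notin> V \<Longrightarrow> threshold (insert v V) E"
| dominating: "threshold V E \<Longrightarrow> v \<notin> V \<Longrightarrow>
     threshold (insert v V) (E \<union> {{v, u} | u. u \<in> V})"

definition spectrally_threshold_dominated :: "nat \<Rightarrow> nat set set \<Rightarrow> bool" where
  "spectrally_threshold_dominated n E \<longleftrightarrow>
     (\<forall>k\<in>{1..n}. \<exists>T. threshold {0..<n} T \<and> card T = card E \<and>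
        (\<Sum>i<k. lap_eigs n T ! i) \<ge> (\<Sum>i<k. lap_eigs n E ! i))"

end

theory Submission
  imports Defs "Jordan_Normal_Form.Schur_Decomposition"
begin

definition mtr :: "'a::comm_ring_1 mat \<Rightarrow> 'a" where
  "mtr X = (\<Sum>i<dim_row X. X$$(i,i))"

lemma mtr_comm:
  fixes X Y :: "'a::comm_ring_1 mat"
  assumes X: "X \<in> carrier_mat n m" and Y: "Y \<in> carrier_mat m n"
  shows "mtr (X*Y) = mtr (Y*X)"
proof -
  have "mtr (X*Y) = (\<Sum>i<n. \<Sum>j<m. X$$(i,j) * Y$$(j,i))"
    unfolding mtr_def using X Y by (auto simp: scalar_prod_def atLeast0LessThan intro!: sum.cong)
  also have "\<dots> = (\<Sum>j<m. \<Sum>i<n. Y$$(j,i) * X$$(i,j))"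
    by (subst sum.swap) (simp add: mult.commute)
  also have "\<dots> = mtr (Y*X)"
    unfolding mtr_def using X Y by (auto simp: scalar_prod_def atLeast0LessThan intro!: sum.cong)
  finally show ?thesis .
qed

lemma mtr_similar:
  fixes B C :: "'a::comm_ring_1 mat"
  assumes "similar_mat_wit B C P Q" "B \<in> carrier_mat n n"
  shows "mtr B = mtr C"
proof -
  from assms have P: "P \<in> carrier_mat n n" and Q: "Q \<in> carrier_mat n n" and C: "C \<in> carrier_mat n n"
    and QP: "Q * P = 1\<^sub>m n" and BB: "B = P * C * Q"
    unfolding similar_mat_wit_def Let_def by auto
  have "mtr B = mtr ((P * C) * Q)" using BB by simp
  also have "\<dots> = mtr (Q * (P * C))" by (rule mtr_comm[of _ n n]) (use P C Q in auto)
  also have "Q * (P * C) = (Q * P) * C" using P C Q by (simp add: assoc_mult_mat)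
  also have "\<dots> = C" using QP C by simp
  finally show ?thesis .
qed

lemma real_sym_eigenvalue_real:
  fixes A :: "real mat" and l :: complex
  assumes A: "A \<in> carrier_mat n n" and sym: "\<And>i j. i<n \<Longrightarrow> j<n \<Longrightarrow> A$$(i,j) = A$$(j,i)"
    and ev: "eigenvalue (map_mat complex_of_real A) l"
  shows "Im l = 0"
proof -
  let ?B = "map_mat complex_of_real A"
  from ev obtain v where v: "v \<in> carrier_vec n" "v \<noteq> 0\<^sub>v n" "?B *\<^sub>v v = l \<cdot>\<^sub>v v"
    unfolding eigenvalue_def eigenvector_def using A by auto
  define s where "s = (\<Sum>i<n. cnj (v$i) * (?B *\<^sub>v v) $ i)"
  have s1: "s = (\<Sum>i<n. \<Sum>j<n. cnj (v$i) * of_real (A$$(i,j)) * v$j)"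
    unfolding s_def using v(1) A
    by (auto simp: scalar_prod_def sum_distrib_left mult.assoc intro!: sum.cong)
  have "cnj s = (\<Sum>i<n. \<Sum>j<n. v$i * of_real (A$$(i,j)) * cnj (v$j))"
    unfolding s1 by (simp add: cnj_sum)
  also have "\<dots> = (\<Sum>j<n. \<Sum>i<n. v$i * of_real (A$$(i,j)) * cnj (v$j))"
    by (rule sum.swap)
  also have "\<dots> = s" unfolding s1
    by (auto intro!: sum.cong simp: sym mult.commute mult.left_commute)
  finally have cs: "cnj s = s" .
  define N where "N = (\<Sum>i<n. cmod (v$i) ^ 2)"
  have cm: "\<And>z::complex. z * cnj z = (of_real (cmod z))^2" by (simp add: complex_norm_square of_real_power[symmetric] del: of_real_power)
  have s2: "s = l * of_real N"
    unfolding s_def N_def using v(1)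
    by (auto simp: v(3) sum_distrib_left cm mult.commute mult.left_commute intro!: sum.cong)
  obtain i where i: "i < n" "v$i \<noteq> 0" using v(1,2) by (metis carrier_vecD eq_vecI index_zero_vec)
  have "N > 0" unfolding N_def
    by (rule sum_pos2[of _ i]) (use i in auto)
  have "Im s = 0" using cs by (metis Im_complex_of_real Reals_cnj_iff complex_is_Real_iff)
  then show ?thesis using s2 \<open>N > 0\<close> by simp
qed

lemma cp_hom: "A \<in> carrier_mat n n \<Longrightarrow> char_poly (map_mat complex_of_real A) = map_poly complex_of_real (char_poly A)"
  by (rule of_real_hom.char_poly_hom)

lemma real_sym_charpoly:
  fixes A :: "real mat"
  assumes A: "A \<in> carrier_mat n n" and sym: "\<And>i j. i<n \<Longrightarrow> j<n \<Longrightarrow> A$$(i,j) = A$$(j,i)"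
  shows "\<exists>rs. char_poly A = (\<Prod>r\<leftarrow>rs. [:-r,1:]) \<and> length rs = n \<and> sum_list rs = (\<Sum>i<n. A$$(i,i))"
proof -
  let ?B = "map_mat complex_of_real A"
  interpret rp: map_poly_inj_idom_hom complex_of_real ..
  have B: "?B \<in> carrier_mat n n" using A by simp
  obtain as where c: "char_poly ?B = (\<Prod>a\<leftarrow>as. [:-a,1:])" and len: "length as = n"
    using char_poly_factorized[OF B] by blast
  have re: "Im a = 0" if "a \<in> set as" for a
  proof -
    have "poly (char_poly ?B) a = 0" unfolding c poly_prod_list
      using that by (auto simp: prod_list_zero_iff)
    then have "eigenvalue ?B a" using eigenvalue_root_char_poly[OF B] by simp
    then show ?thesis using real_sym_eigenvalue_real[OF A sym] by blast
  qed
  define rs where "rs = map Re as"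
  have as: "as = map complex_of_real rs" unfolding rs_def using re
    by (induct as) (auto simp: complex_eq_iff)
  have hom: "map_poly complex_of_real (\<Prod>r\<leftarrow>xs. [:-r,1:]) = (\<Prod>r\<leftarrow>xs. [:-complex_of_real r,1:])" for xs
    by (induct xs) (simp_all add: rp.hom_mult del: mult_pCons_left)
  have "map_poly complex_of_real (char_poly A) = char_poly ?B"
    by (rule cp_hom[OF A, symmetric])
  also have "\<dots> = map_poly complex_of_real (\<Prod>r\<leftarrow>rs. [:-r,1:])"
    unfolding c hom as by (simp add: o_def)
  finally have eq: "char_poly A = (\<Prod>r\<leftarrow>rs. [:-r,1:])"
    by (rule rp.injectivity)
  obtain C P Q where sd: "schur_decomposition ?B as = (C,P,Q)" by (cases "schur_decomposition ?B as") auto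
  from schur_decomposition[OF B c sd] have sim: "similar_mat_wit ?B C P Q" and dC: "diag_mat C = as" by auto
  have "mtr ?B = mtr C" by (rule mtr_similar[OF sim B])
  also have "mtr C = sum_list as" unfolding dC[symmetric] diag_mat_def mtr_def
    by (simp add: sum_list_sum_nth atLeast0LessThan)
  finally have t: "mtr ?B = sum_list as" .
  have t1: "mtr ?B = complex_of_real (\<Sum>i<n. A$$(i,i))" unfolding mtr_def using A by simp
  have t2: "sum_list as = complex_of_real (sum_list rs)" unfolding as by (induct rs) auto
  have "complex_of_real (sum_list rs) = complex_of_real (\<Sum>i<n. A$$(i,i))" using t t1 t2 by simp
  then have "sum_list rs = (\<Sum>i<n. A$$(i,i))" using of_real_eq_iff by blast
  moreover have "length rs = n" using len unfolding rs_def by simp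
  ultimately show ?thesis using eq by blast
qed


lemma sg_sub: "simple_graph n E \<Longrightarrow> E \<subseteq> Pow {..<n}"
  unfolding simple_graph_def by auto

lemma sg_finite: "simple_graph n E \<Longrightarrow> finite E"
  using sg_sub by (metis finite_Pow_iff finite_lessThan finite_subset)

lemma sg_card: "simple_graph n E \<Longrightarrow> e \<in> E \<Longrightarrow> card {i\<in>{..<n}. i \<in> e} = 2"
proof -
  assume "simple_graph n E" "e \<in> E"
  then obtain i j where "i \<noteq> j" "i < n" "j < n" "e = {i,j}" unfolding simple_graph_def by blast
  then have "{i\<in>{..<n}. i \<in> e} = {i,j}" by auto
  then show ?thesis using \<open>i \<noteq> j\<close> by simp
qed

lemma handshake:
  assumes "simple_graph n E"
  shows "(\<Sum>i<n. real (degree E i)) = 2 * real (card E)"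
proof -
  have fE: "finite E" using sg_finite[OF assms] .
  have "(\<Sum>i<n. degree E i) = (\<Sum>i<n. \<Sum>e\<in>E. if i \<in> e then 1 else 0)"
    unfolding degree_def by (auto simp: sum.inter_filter[OF fE, symmetric] intro!: sum.cong)
  also have "\<dots> = (\<Sum>e\<in>E. \<Sum>i<n. if i \<in> e then 1 else 0)" by (rule sum.swap)
  also have "\<dots> = (\<Sum>e\<in>E. card {i\<in>{..<n}. i \<in> e})"
    by (auto simp: sum.inter_filter[symmetric] intro!: sum.cong)
  also have "\<dots> = (\<Sum>e\<in>E. 2)" using sg_card[OF assms] by (auto intro!: sum.cong)
  finally have "(\<Sum>i<n. degree E i) = 2 * card E" by simp
  then show ?thesis by (metis of_nat_mult of_nat_numeral of_nat_sum)
qed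

lemma threshold_edges: "threshold V T \<Longrightarrow> \<forall>e\<in>T. \<exists>i j. i \<noteq> j \<and> i \<in> V \<and> j \<in> V \<and> e = {i,j}"
proof (induction rule: threshold.induct)
  case empty
  then show ?case by simp
next
  case (isolated V E v)
  then show ?case by blast
next
  case (dominating V E v)
  show ?case
  proof
    fix e assume "e \<in> E \<union> {{v, u} |u. u \<in> V}"
    then consider "e \<in> E" | u where "u \<in> V" "e = {v,u}" by blast
    then show "\<exists>i j. i \<noteq> j \<and> i \<in> insert v V \<and> j \<in> insert v V \<and> e = {i, j}"
    proof cases
      case 1
      then obtain i j where "i \<noteq> j" "i \<in> V" "j \<in> V" "e = {i,j}" using dominating.IH by blast
      then show ?thesis by blast
    next
      case 2
      then have "v \<noteq> u" using dominating.hyps(2) by blast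
      then show ?thesis using 2 by blast
    qed
  qed
qed
lemma threshold_sg: "threshold {0..<n} T \<Longrightarrow> simple_graph n T"
  unfolding simple_graph_def
proof
  fix e assume "threshold {0..<n} T" "e \<in> T"
  then obtain i j where "i \<noteq> j" "i \<in> {0..<n}" "j \<in> {0..<n}" "e = {i,j}" using threshold_edges by blast
  then show "\<exists>i j. i \<noteq> j \<and> i < n \<and> j < n \<and> e = {i, j}" by auto
qed

lemma lap_props:
  assumes "simple_graph n E"
  shows "length (lap_eigs n E) = n \<and> sum_list (lap_eigs n E) = 2 * real (card E)
     \<and> sorted_wrt (\<ge>) (lap_eigs n E)"
proof -
  let ?L = "laplacian n E"
  have L: "?L \<in> carrier_mat n n" unfolding laplacian_def by simp
  have sym: "?L$$(i,j) = ?L$$(j,i)" if "i<n" "j<n" for i j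
    using that unfolding laplacian_def by (auto simp: insert_commute)
  obtain rs where c: "char_poly ?L = (\<Prod>r\<leftarrow>rs. [:-r,1:])" and len: "length rs = n"
    and s: "sum_list rs = (\<Sum>i<n. ?L$$(i,i))"
    using real_sym_charpoly[OF L sym] by blast
  have pr: "proots (char_poly ?L) = mset rs" unfolding c
  proof (induct rs)
    case (Cons r rs)
    have "[:-r,1:] \<noteq> 0" by simp
    moreover have "(\<Prod>r\<leftarrow>rs. [:-r,1:]) \<noteq> (0::real poly)" by (auto simp: prod_list_zero_iff)
    ultimately show ?case using Cons by (simp add: proots_mult del: mult_pCons_left)
  qed simp
  have dg: "(\<Sum>i<n. ?L$$(i,i)) = (\<Sum>i<n. real (degree E i))"
    unfolding laplacian_def by simp
  have "lap_eigs n E = rev (sorted_list_of_multiset (mset rs))"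
    unfolding lap_eigs_def pr ..
  moreover have "mset (sorted_list_of_multiset (mset rs)) = mset rs" by simp
  ultimately have m: "mset (lap_eigs n E) = mset rs" by simp
  have "length (lap_eigs n E) = n" using m len by (metis size_mset)
  moreover have "sum_list (lap_eigs n E) = sum_list rs" using m by (metis sum_mset_sum_list)
  moreover have "sorted_wrt (\<ge>) (lap_eigs n E)"
    unfolding lap_eigs_def sorted_wrt_rev
    using sorted_sorted_list_of_multiset[of "proots (char_poly ?L)"] by (simp only: sorted_wrt_iff_nth_less)
  ultimately show ?thesis using s dg handshake[OF assms] by argo
qed



lemma sum_list_shift: "sum_list (map (\<lambda>x. x - d) ys) = sum_list ys - real (length ys) * d"
  for ys :: "real list"
  by (induct ys) (auto simp: algebra_simps)

lemma abs_lower1: "sum_list (map (\<lambda>x. \<bar>x - d\<bar>) ys) \<ge> sum_list ys - real (length ys) * d"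
  for ys :: "real list"
  by (induct ys) (auto simp: algebra_simps)

lemma abs_lower2: "sum_list (map (\<lambda>x. \<bar>x - d\<bar>) ys) \<ge> real (length ys) * d - sum_list ys"
  for ys :: "real list"
  by (induct ys) (auto simp: algebra_simps)

lemma energy_lower:
  fixes xs :: "real list"
  assumes s: "sum_list xs = real (length xs) * d" and k: "k \<le> length xs"
  shows "sum_list (map (\<lambda>x. \<bar>x - d\<bar>) xs) \<ge> 2 * (sum_list (take k xs) - real k * d)"
proof -
  have xs: "xs = take k xs @ drop k xs" by simp
  have l1: "length (take k xs) = k" using k by simp
  have l2: "length (drop k xs) = length xs - k" by simp
  have "sum_list (map (\<lambda>x. \<bar>x - d\<bar>) xs) = sum_list (map (\<lambda>x. \<bar>x - d\<bar>) (take k xs)) + sum_list (map (\<lambda>x. \<bar>x - d\<bar>) (drop k xs))"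
    by (metis append_take_drop_id map_append sum_list_append)
  moreover have "sum_list xs = sum_list (take k xs) + sum_list (drop k xs)"
    by (metis append_take_drop_id sum_list_append)
  moreover note abs_lower1[where ys="take k xs" and d=d] abs_lower2[where ys="drop k xs" and d=d]
  ultimately show ?thesis using s l1 l2 k by (simp add: of_nat_diff algebra_simps)
qed

lemma abs_eq1: "(\<forall>x\<in>set ys. x > d) \<Longrightarrow> sum_list (map (\<lambda>x. \<bar>x - d\<bar>) ys) = sum_list ys - real (length ys) * d"
  for ys :: "real list"
  by (induct ys) (auto simp: algebra_simps)

lemma abs_eq2: "(\<forall>x\<in>set ys. x \<le> d) \<Longrightarrow> sum_list (map (\<lambda>x. \<bar>x - d\<bar>) ys) = real (length ys) * d - sum_list ys"
  for ys :: "real list"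
  by (induct ys) (auto simp: algebra_simps)

lemma energy_attained:
  fixes xs :: "real list"
  assumes s: "sum_list xs = real (length xs) * d" and srt: "sorted_wrt (\<ge>) xs"
  shows "\<exists>k\<le>length xs. sum_list (map (\<lambda>x. \<bar>x - d\<bar>) xs) = 2 * (sum_list (take k xs) - real k * d)"
proof -
  define k where "k = length (takeWhile (\<lambda>x. x > d) xs)"
  have tk: "take k xs = takeWhile (\<lambda>x. x > d) xs" unfolding k_def by (metis takeWhile_eq_take)
  have dk: "drop k xs = dropWhile (\<lambda>x. x > d) xs" unfolding k_def by (metis dropWhile_eq_drop)
  have kl: "k \<le> length xs" unfolding k_def by (rule length_takeWhile_le)
  have xs: "xs = take k xs @ drop k xs" by simp
  have a1: "\<forall>x\<in>set (take k xs). x > d" unfolding tk by (meson set_takeWhileD)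
  have a2: "\<forall>x\<in>set (drop k xs). x \<le> d"
  proof (cases "drop k xs")
    case Nil then show ?thesis by simp
  next
    case (Cons y ys)
    have "\<not> y > d" using Cons dk by (metis hd_dropWhile list.distinct(1) list.sel(1))
    moreover have "sorted_wrt (\<ge>) (drop k xs)" using srt by (metis sorted_wrt_drop)
    ultimately show ?thesis using Cons by auto
  qed
  have "sum_list (map (\<lambda>x. \<bar>x - d\<bar>) xs) = sum_list (map (\<lambda>x. \<bar>x - d\<bar>) (take k xs)) + sum_list (map (\<lambda>x. \<bar>x - d\<bar>) (drop k xs))"
    by (metis append_take_drop_id map_append sum_list_append)
  moreover have "sum_list xs = sum_list (take k xs) + sum_list (drop k xs)"
    by (metis append_take_drop_id sum_list_append)
  moreover note abs_eq1[OF a1] abs_eq2[OF a2]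
  ultimately have "sum_list (map (\<lambda>x. \<bar>x - d\<bar>) xs) = 2 * (sum_list (take k xs) - real k * d)"
    using s kl by (simp add: of_nat_diff algebra_simps)
  then show ?thesis using kl by blast
qed

lemma sum_nth_take: "k \<le> length xs \<Longrightarrow> (\<Sum>i<k. xs ! i) = sum_list (take k xs)"
  for xs :: "real list"
  by (simp add: sum_list_sum_nth min_def atLeast0LessThan)

theorem theorem1:
  fixes n :: nat and E :: "nat set set"
  assumes "simple_graph n E"
    and "spectrally_threshold_dominated n E"
  shows "\<exists>T. threshold {0..<n} T \<and> card T = card E \<and> lap_energy n T \<ge> lap_energy n E"
proof (cases "n = 0")
  case True
  then have "E = {}" using assms(1) unfolding simple_graph_def by auto
  then show ?thesis using True threshold.empty by auto
next
  case False
  define d where "d = 2 * real (card E) / real n"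
  have energy: "lap_energy n F = sum_list (map (\<lambda>x. \<bar>x - d\<bar>) (lap_eigs n F))" if "card F = card E" for F
    unfolding lap_energy_def d_def that by (simp add: o_def)
  have props: "length (lap_eigs n F) = n \<and> sum_list (lap_eigs n F) = real n * d \<and> sorted_wrt (\<ge>) (lap_eigs n F)"
    if "simple_graph n F" "card F = card E" for F
    using lap_props[OF that(1)] that(2) False unfolding d_def by auto
  note pE = props[OF assms(1) refl]
  obtain k where k: "k \<le> n" and kE: "lap_energy n E = 2 * (sum_list (take k (lap_eigs n E)) - real k * d)"
    using energy_attained[of "lap_eigs n E" d] pE energy[OF refl] by auto
  show ?thesis
  proof (cases "k = 0")
    case True
    obtain T where T: "threshold {0..<n} T" "card T = card E"
      using assms(2) False unfolding spectrally_threshold_dominated_def by force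
    have "lap_energy n T \<ge> 0" unfolding lap_energy_def by (rule sum_list_nonneg) auto
    moreover have "lap_energy n E = 0" using kE True by simp
    ultimately show ?thesis using T by auto
  next
    case k0: False
    obtain T where T: "threshold {0..<n} T" "card T = card E"
      and dom: "(\<Sum>i<k. lap_eigs n T ! i) \<ge> (\<Sum>i<k. lap_eigs n E ! i)"
      using assms(2) k k0 unfolding spectrally_threshold_dominated_def by force
    note pT = props[OF threshold_sg[OF T(1)] T(2)]
    have dom': "sum_list (take k (lap_eigs n T)) \<ge> sum_list (take k (lap_eigs n E))"
      using dom sum_nth_take[of k "lap_eigs n T"] sum_nth_take[of k "lap_eigs n E"] pT pE k by simp
    have "lap_energy n T \<ge> 2 * (sum_list (take k (lap_eigs n T)) - real k * d)"
      using energy_lower[of "lap_eigs n T" d k] pT k energy[OF T(2)] by simp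
    then have "lap_energy n T \<ge> lap_energy n E" using kE dom' by argo
    then show ?thesis using T by blast
  qed
qed


end
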